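(* Let $J\in\mathbb{Z}_{>0}$ be not of the form $J = 3^k\prod_i p_i^{l_i}\prod_j q_j^{2m_j}$ (with $k,l_i,m_j\in\mathbb{Z}_{\ge0}$, primes $p_i\equiv1\pmod 3$, primes $q_j\equiv -1\pmod 3$), and suppose $J$ satisfies one of: (1) $J$ is a prime; (2) $J=pq$ where $p,q$ are odd primes with $q>3p$; (3) $J=2p$ where $p$ is an odd prime. Then $\Lambda_h$ has no well-rounded sublattice of index $J$.
   Context: $\Lambda_h = \begin{bmatrix} 1 & -1/2 \\ 0 & \sqrt3/2\end{bmatrix}\mathbb{Z}^2$. A full-rank lattice in $\mathbb{R}^2$ is well-rounded if it has a basis consisting of vectors of minimal nonzero Euclidean norm. The index of a full-rank sublattice $\Gamma\subseteq\Lambda_h$ is $|\Lambda_h:\Gamma|=\det\Gamma/\det\Lambda_h$. *)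

theory Defs
  imports "HOL-Analysis.Analysis"
begin

definition lattice_gen :: "real^2 \<Rightarrow> real^2 \<Rightarrow> (real^2) set" where
  "lattice_gen b1 b2 = {of_int m *\<^sub>R b1 + of_int n *\<^sub>R b2 | m n. True}"

definition det2 :: "real^2 \<Rightarrow> real^2 \<Rightarrow> real" where
  "det2 b1 b2 = b1$1 * b2$2 - b1$2 * b2$1"

definition is_lattice_basis :: "(real^2) set \<Rightarrow> real^2 \<Rightarrow> real^2 \<Rightarrow> bool" where
  "is_lattice_basis L b1 b2 \<longleftrightarrow> det2 b1 b2 \<noteq> 0 \<and> L = lattice_gen b1 b2"

definition full_rank_lattice :: "(real^2) set \<Rightarrow> bool" where
  "full_rank_lattice L \<longleftrightarrow> (\<exists>b1 b2. is_lattice_basis L b1 b2)"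

definition lattice_det :: "(real^2) set \<Rightarrow> real" where
  "lattice_det L = (THE d. \<exists>b1 b2. is_lattice_basis L b1 b2 \<and> d = \<bar>det2 b1 b2\<bar>)"

definition well_rounded :: "(real^2) set \<Rightarrow> bool" where
  "well_rounded L \<longleftrightarrow> (\<exists>b1 b2. is_lattice_basis L b1 b2 \<and>
      (\<forall>v\<in>L. v \<noteq> 0 \<longrightarrow> norm b1 \<le> norm v \<and> norm b2 \<le> norm v))"

definition Lambda_h :: "(real^2) set" where
  "Lambda_h = lattice_gen (vector [1, 0]) (vector [-1/2, sqrt 3 / 2])"

definition lattice_index :: "(real^2) set \<Rightarrow> (real^2) set \<Rightarrow> real" where
  "lattice_index \<Lambda> \<Gamma> = lattice_det \<Gamma> / lattice_det \<Lambda>"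

definition special_form :: "nat \<Rightarrow> bool" where
  "special_form J \<longleftrightarrow> (\<exists>k A B l m. finite A \<and> finite B \<and>
      (\<forall>p\<in>A. prime p \<and> p mod 3 = 1) \<and> (\<forall>q\<in>B. prime q \<and> q mod 3 = 2) \<and>
      J = 3 ^ k * (\<Prod>p\<in>A. p ^ l p) * (\<Prod>q\<in>B. q ^ (2 * m q)))"

end

theory Submission
  imports Defs "HOL-Number_Theory.Number_Theory"
begin


lemma fermat_int:
  fixes r :: nat and a :: int
  assumes "prime r" "odd r" "\<not> int r dvd a"
  shows "int r dvd a ^ (r - 1) - 1"
proof -
  have "\<not> r dvd nat \<bar>a\<bar>" using assms(3)
    by (metis abs_dvd_iff dvd_abs_iff int_dvd_int_iff int_nat_eq abs_ge_zero nat_0_le)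
  then have "[nat \<bar>a\<bar> ^ (r - 1) = 1] (mod r)" using fermat_theorem[OF assms(1)] by blast
  then have "[int (nat \<bar>a\<bar> ^ (r - 1)) = int 1] (mod int r)" using cong_int_iff by blast
  then have "[\<bar>a\<bar> ^ (r - 1) = 1] (mod int r)" by simp
  moreover have "\<bar>a\<bar> ^ (r - 1) = a ^ (r - 1)" using assms(2)
    by (simp add: power_even_abs)
  ultimately show ?thesis by (simp add: cong_iff_dvd_diff)
qed

lemma eis_dvd:
  fixes r :: nat and a b :: int
  assumes pr: "prime r" and r3: "r mod 3 = 2" and d: "int r dvd a^2 - a*b + b^2"
  shows "int r dvd a \<and> int r dvd b"
proof (cases "r = 2")
  case True
  then have "even (a^2 - a*b + b^2)" using d by simp
  then show ?thesis using True by (cases "even a"; cases "even b"; auto simp: power2_eq_square)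
next
  case False
  have pri: "prime (int r)" using pr by simp
  have "r > 2" using False prime_ge_2_nat[OF pr] by linarith
  then have oddr: "odd r" using prime_odd_nat[OF pr] by blast
  have r5: "r mod 6 = 5" using r3 oddr by presburger
  have "r - 1 = 6*(r div 6) + 4" using r5 by presburger
  then obtain k where k: "r - 1 = 6*k + 4" by blast
  show ?thesis
  proof (rule ccontr)
    assume nb0: "\<not> (int r dvd a \<and> int r dvd b)"
    have nb: "\<not> int r dvd b"
    proof
      assume "int r dvd b"
      moreover have "a^2 = (a^2 - a*b + b^2) + (a - b)*b" by (simp add: algebra_simps power2_eq_square eval_nat_numeral)
      ultimately have "int r dvd a^2" using d by (metis dvd_add dvd_mult)
      then have "int r dvd a" using pri prime_dvd_power by blast
      then show False using nb0 \<open>int r dvd b\<close> by blast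
    qed
    have na: "\<not> int r dvd a"
    proof
      assume "int r dvd a"
      moreover have "b^2 = (a^2 - a*b + b^2) + (b - a)*a" by (simp add: algebra_simps power2_eq_square eval_nat_numeral)
      ultimately have "int r dvd b^2" using d by (metis dvd_add dvd_mult)
      then have "int r dvd b" using pri prime_dvd_power by blast
      then show False using nb by blast
    qed
    have fa: "int r dvd a^(6*k+4) - 1" using fermat_int[OF pr oddr na] k by simp
    have fb: "int r dvd b^(6*k+4) - 1" using fermat_int[OF pr oddr nb] k by simp
    have e6: "int r dvd a^6 - b^6"
    proof -
      have "a^6 - b^6 = (a^3 - b^3) * (a + b) * (a^2 - a*b + b^2)" by (simp add: algebra_simps power2_eq_square eval_nat_numeral)
      then show ?thesis using d by simp
    qed
    have e6k: "int r dvd a^(6*k) - b^(6*k)"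
    proof -
      have "[a^6 = b^6] (mod int r)" using e6 by (simp add: cong_iff_dvd_diff)
      then have "[(a^6)^k = (b^6)^k] (mod int r)" by (rule cong_pow)
      then show ?thesis by (simp add: cong_iff_dvd_diff power_mult)
    qed
    have "int r dvd a^(6*k) * (a^4 - b^4)"
    proof -
      have "a^(6*k) * (a^4 - b^4) = (a^(6*k+4) - 1) - (b^(6*k+4) - 1) - b^4 * (a^(6*k) - b^(6*k))"
        by (simp add: algebra_simps power_add)
      moreover have "int r dvd (a^(6*k+4) - 1) - (b^(6*k+4) - 1) - b^4 * (a^(6*k) - b^(6*k))"
        by (rule dvd_diff[OF dvd_diff[OF fa fb] dvd_mult[OF e6k]])
      ultimately show ?thesis by simp
    qed
    then have e4: "int r dvd a^4 - b^4" using pri na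
      by (meson prime_dvd_multD prime_dvd_power)
    have "int r dvd b^4 * (a^2 - b^2)"
    proof -
      have "b^4 * (a^2 - b^2) = (a^6 - b^6) - a^2 * (a^4 - b^4)" by (simp add: algebra_simps power2_eq_square eval_nat_numeral)
      moreover have "int r dvd (a^6 - b^6) - a^2 * (a^4 - b^4)"
        by (rule dvd_diff[OF e6 dvd_mult[OF e4]])
      ultimately show ?thesis by simp
    qed
    then have e2: "int r dvd a^2 - b^2" using pri nb
      by (meson prime_dvd_multD prime_dvd_power)
    have "int r dvd b * (2*b - a)"
    proof -
      have "b * (2*b - a) = (a^2 - a*b + b^2) - (a^2 - b^2)" by (simp add: algebra_simps power2_eq_square eval_nat_numeral)
      moreover have "int r dvd (a^2 - a*b + b^2) - (a^2 - b^2)"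
        by (rule dvd_diff[OF d e2])
      ultimately show ?thesis by simp
    qed
    then have e1: "int r dvd 2*b - a" using pri nb by (meson prime_dvd_multD)
    have "int r dvd 3 * b^2"
    proof -
      have eq: "3 * b^2 = (a^2 - b^2) - (a - 2*b) * (a + 2*b)" by (simp add: algebra_simps power2_eq_square eval_nat_numeral)
      have m: "int r dvd (a - 2*b) * (a + 2*b)" using e1
        by (metis dvd_mult2 dvd_minus_iff minus_diff_eq)
      show ?thesis unfolding eq by (rule dvd_diff[OF e2 m])
    qed
    then have "int r dvd 3" using pri nb by (meson prime_dvd_multD prime_dvd_power)
    then have "r dvd 3" by (metis int_dvd_int_iff of_nat_numeral)
    then have "r \<le> 3" by (simp add: dvd_imp_le)
    moreover have "r \<ge> 2" using pr prime_ge_2_nat by blast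
    ultimately show False using r3 False by (cases "r = 2"; cases "r = 3"; simp)
  qed
qed

lemma norm_sq_dvd:
  fixes r N :: nat and a b :: int
  assumes "prime r" "r mod 3 = 2" "a^2 - a*b + b^2 = int N" "r dvd N"
  shows "r^2 dvd N"
proof -
  have "int r dvd a^2 - a*b + b^2" using assms(3,4) by simp
  then have "int r dvd a \<and> int r dvd b" by (rule eis_dvd[OF assms(1,2)])
  then have "int r dvd a" "int r dvd b" by auto
  then obtain a' b' where ab: "a = int r * a'" "b = int r * b'" by (meson dvdE)
  have e: "a^2 - a*b + b^2 = int r^2 * (a'^2 - a'*b' + b'^2)"
    unfolding ab by (simp add: power2_eq_square algebra_simps)
  have "int N = int r^2 * (a'^2 - a'*b' + b'^2)" using assms(3) e by simp
  then have "int (r^2) dvd int N" by (metis dvd_triv_left of_nat_power)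
  then show ?thesis by (simp only: int_dvd_int_iff)
qed

lemma red_aux:
  fixes r :: nat and s t M :: int
  assumes pr: "prime r" and pos: "s > 0" "t > 0" and st: "s*t = int r^2 * M"
    and le: "s \<le> 3*t" and lt: "3*M < int r^2" and nd: "\<not> int r dvd t"
  shows False
proof -
  have pri: "prime (int r)" using pr by simp
  have "coprime (int r ^ 2) t" using pri nd
    by (simp add: prime_imp_coprime coprime_power_left_iff)
  moreover have "int r ^ 2 dvd s * t" using st by simp
  ultimately have "int r ^ 2 dvd s" using coprime_dvd_mult_left_iff by blast
  then obtain s0 where s0: "s = int r ^ 2 * s0" by blast
  have r2: "int r ^ 2 > 0" using pr prime_gt_0_nat by simp
  have "s0 > 0" using pos s0 r2 by (simp add: zero_less_mult_iff)
  have "s0 * t = M" using st r2 unfolding s0 by (simp add: mult.assoc)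
  then have "t \<le> M" using \<open>s0 > 0\<close> pos by (smt (verit) mult_le_cancel_right1)
  moreover have "s \<ge> int r ^ 2" using s0 \<open>s0 > 0\<close> r2 by (simp add: mult_le_cancel_left1)
  ultimately show False using le lt by linarith
qed

lemma red:
  fixes r :: nat and s t M :: int
  assumes pr: "prime r" and pos: "s > 0" "t > 0" and st: "s*t = 3 * int r^2 * M"
    and hA: "s \<le> 3*t" and hB: "t \<le> 3* s" and hL: "9*M < int r^2"
  shows "\<exists>s' t'. s = int r * s' \<and> t = int r * t' \<and> s' > 0 \<and> t' > 0 \<and> s' * t' = 3 * M
           \<and> s' \<le> 3*t' \<and> t' \<le> 3* s'"
proof -
  have st': "s*t = int r^2 * (3*M)" using st by simp
  have st'': "t* s = int r^2 * (3*M)" using st by (simp add: mult.commute)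
  have h9: "3*(3*M) < int r^2" using hL by simp
  have dt: "int r dvd t" using red_aux[OF pr pos st' hA h9] by blast
  have ds: "int r dvd s" using red_aux[OF pr pos(2) pos(1) st'' hB h9] by blast
  obtain s' where s': "s = int r * s'" using ds by blast
  obtain t' where t': "t = int r * t'" using dt by blast
  have r0: "int r > 0" using pr prime_gt_0_nat by simp
  have "s' > 0" using pos(1) r0 s' by (simp add: zero_less_mult_iff)
  moreover have "t' > 0" using pos(2) r0 t' by (simp add: zero_less_mult_iff)
  moreover have "s' * t' = 3 * M"
  proof -
    have "int r^2 * (s' * t') = int r^2 * (3*M)" using st' unfolding s' t' by (simp add: algebra_simps power2_eq_square)
    then show ?thesis using r0 by simp
  qed
  moreover have "s' \<le> 3*t'" using hA r0 unfolding s' t' by (simp add: mult.left_commute)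
  moreover have "t' \<le> 3* s'" using hB r0 unfolding s' t' by (simp add: mult.left_commute)
  ultimately show ?thesis using s' t' by blast
qed

lemma sq_bounds:
  fixes s t N :: int
  assumes "s > 0" "t > 0" "s * t = N" "s \<le> 3*t" "t \<le> 3 * s"
  shows "s * s \<le> 3 * N" "N \<le> 3 * (s * s)"
proof -
  have "s * s \<le> s * (3*t)" using assms(1,4) by (simp add: mult_left_mono)
  then show "s * s \<le> 3 * N" using assms(3) by (simp add: algebra_simps)
  have "s * t \<le> s * (3 * s)" using assms(1,5) by (simp add: mult_left_mono)
  then show "N \<le> 3 * (s * s)" using assms(3) by (simp add: algebra_simps)
qed

lemma le_of_sq:
  fixes s :: int and k :: int
  assumes "s * s \<le> k * k" "s > 0" "k \<ge> 0"
  shows "s \<le> k"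
  using power2_le_imp_le[of s k] assms by (simp add: power2_eq_square)

lemma ge_of_sq:
  fixes s :: int and k :: int
  assumes "k * k \<le> s * s" "s > 0" "k \<ge> 0"
  shows "k \<le> s"
  using power2_le_imp_le[of k s] assms by (simp add: power2_eq_square)

lemma base3:
  fixes s t :: int
  assumes "s > 0" "t > 0" "s * t = 3"
  shows "s + t = 4"
proof -
  have "s * 1 \<le> s * t" using assms(1,2) by (intro mult_left_mono) auto
  then have "s \<le> 3" using assms(3) by simp
  moreover have "1 * t \<le> s * t" using assms(1,2) by (intro mult_right_mono) auto
  then have "t \<le> 3" using assms(3) by simp
  ultimately have "s = 1 \<or> s = 2 \<or> s = 3" "t = 1 \<or> t = 2 \<or> t = 3" using assms(1,2) by linarith+
  then show ?thesis using assms(3) by (elim disjE; simp)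
qed

lemma base27:
  fixes s t :: int
  assumes "s > 0" "t > 0" "s * t = 27" "s \<le> 3*t" "t \<le> 3 * s"
  shows "s + t = 12"
proof -
  have b1: "s * s \<le> 81" "27 \<le> 3 * (s * s)" using sq_bounds[OF assms] by simp_all
  have ts: "t * s = 27" using assms(3) by (simp add: mult.commute)
  have b2: "t * t \<le> 81" "27 \<le> 3 * (t * t)" using sq_bounds[OF assms(2,1) ts assms(5,4)] by simp_all
  have "s \<le> 9" using le_of_sq[of s 9] b1 assms(1) by simp
  moreover have "3 \<le> s" using ge_of_sq[of 3 s] b1 assms(1) by simp
  moreover have "t \<le> 9" using le_of_sq[of t 9] b2 assms(2) by simp
  moreover have "3 \<le> t" using ge_of_sq[of 3 t] b2 assms(2) by simp
  ultimately have "s = 3 \<or> s = 4 \<or> s = 5 \<or> s = 6 \<or> s = 7 \<or> s = 8 \<or> s = 9"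
     "t = 3 \<or> t = 4 \<or> t = 5 \<or> t = 6 \<or> t = 7 \<or> t = 8 \<or> t = 9" by linarith+
  then show ?thesis using assms(3) by (elim disjE; simp)
qed

lemma both_even:
  fixes s t :: int
  assumes "even (s + t)" "even (s * t)"
  shows "even s \<and> even t"
  using assms unfolding even_add even_mult_iff by blast

lemma core:
  fixes p :: nat and s t :: int
  assumes pr: "prime p" and od: "odd p" and pos: "s > 0" "t > 0" and st: "s * t = 3 * int p^2"
    and h1: "s \<le> 3*t" and h2: "t \<le> 3 * s"
  shows "s + t = 4 * int p"
proof (cases "p = 3")
  case True
  then show ?thesis using base27[OF pos _ h1 h2] st by simp
next
  case False
  have "p \<ge> 2" using pr prime_ge_2_nat by blast
  then have "p \<ge> 5" using False od by presburger
  then have "int p \<ge> 5" by simp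
  then have "int p * int p \<ge> 5 * 5" by (intro mult_mono) auto
  then have lt: "9 * 1 < int p^2" by (simp add: power2_eq_square)
  obtain s' t' where R: "s = int p * s'" "t = int p * t'" "s' > 0" "t' > 0" "s' * t' = 3 * 1"
    using red[OF pr pos _ h1 h2 lt] st by auto
  have "s' + t' = 4" using base3[OF R(3,4)] R(5) by simp
  then show ?thesis unfolding R(1,2) by (simp add: algebra_simps) (metis distrib_left mult.commute)
qed

lemma halve:
  fixes s t n X :: int
  assumes pos: "s > 0" "t > 0" and st: "s * t = 4 * X" and sn: "s + t = 4 * n"
    and h1: "s \<le> 3*t" and h2: "t \<le> 3 * s"
  shows "\<exists>s' t'. s = 2 * s' \<and> t = 2 * t' \<and> s' > 0 \<and> t' > 0 \<and> s' * t' = X \<and> s' + t' = 2 * n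
     \<and> s' \<le> 3*t' \<and> t' \<le> 3 * s'"
proof -
  have "even (s + t)" "even (s * t)" using st sn by auto
  then have "even s \<and> even t" by (rule both_even)
  then obtain s' t' where e: "s = 2 * s'" "t = 2 * t'" by (meson evenE)
  have "4 * (s' * t') = 4 * X" using st unfolding e by (simp add: algebra_simps)
  then have "s' * t' = X" by simp
  then show ?thesis using e pos sn h1 h2 by auto
qed

lemma caseA:
  fixes q :: nat and s t n :: int
  assumes pr: "prime q" and q3: "q mod 3 = 2" and pos: "s > 0" "t > 0"
    and st: "s * t = 3 * int q^2" and sn: "s + t = 4 * n"
    and h1: "s \<le> 3*t" and h2: "t \<le> 3 * s"
  shows "n = int q"
proof (cases "q = 2")
  case True
  have "s * t = 4 * 3" using st True by simp
  then obtain s' t' where R: "s' > 0" "t' > 0" "s' * t' = 3" "s' + t' = 2 * n"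
    using halve[OF pos _ sn h1 h2] by blast
  show ?thesis using base3[OF R(1-3)] R(4) True by simp
next
  case False
  then have "odd q" using pr prime_odd_nat prime_ge_2_nat[OF pr] by (metis le_neq_implies_less)
  then show ?thesis using core[OF pr _ pos st h1 h2] sn by simp
qed

lemma caseB:
  fixes p :: nat and s t n :: int
  assumes pr: "prime p" and od: "odd p" and pos: "s > 0" "t > 0"
    and st: "s * t = 3 * int (2 * p)^2" and sn: "s + t = 4 * n"
    and h1: "s \<le> 3*t" and h2: "t \<le> 3 * s"
  shows "n = int (2 * p)"
proof -
  have "s * t = 4 * (3 * int p^2)" using st by (simp add: power2_eq_square)
  then obtain s' t' where R: "s' > 0" "t' > 0" "s' * t' = 3 * int p^2" "s' + t' = 2 * n"
     "s' \<le> 3*t'" "t' \<le> 3 * s'"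
    using halve[OF pos _ sn h1 h2] by blast
  have "s' + t' = 4 * int p" by (rule core[OF pr od R(1,2,3,5,6)])
  then show ?thesis using R(4) by simp
qed

lemma caseC:
  fixes p q :: nat and s t n :: int
  assumes pp: "prime p" and pq: "prime q" and od: "odd p" and qp: "q > 3 * p" and pos: "s > 0" "t > 0"
    and st: "s * t = 3 * int (p * q)^2" and sn: "s + t = 4 * n"
    and h1: "s \<le> 3*t" and h2: "t \<le> 3 * s"
  shows "n = int (p * q)"
proof -
  have st': "s * t = 3 * int q^2 * int p^2" using st by (simp add: power2_eq_square algebra_simps)
  have "int q > 3 * int p" using qp by simp
  moreover have "int p \<ge> 0" by simp
  ultimately have "int q * int q > (3 * int p) * (3 * int p)" by (intro mult_strict_mono) auto
  then have lt: "9 * int p^2 < int q^2" by (simp add: power2_eq_square)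
  obtain s' t' where R: "s = int q * s'" "t = int q * t'" "s' > 0" "t' > 0" "s' * t' = 3 * int p^2"
      "s' \<le> 3*t'" "t' \<le> 3 * s'"
    using red[OF pq pos st' h1 h2 lt] by blast
  have "s' + t' = 4 * int p" by (rule core[OF pp od R(3,4,5,6,7)])
  moreover have "s + t = int q * (s' + t')" unfolding R(1,2) by (simp add: distrib_left)
  ultimately have "s + t = int q * (4 * int p)" by simp
  then show ?thesis using sn by simp
qed



lemma det2_comb:
  "det2 (x1 *\<^sub>R u + y1 *\<^sub>R v) (x2 *\<^sub>R u + y2 *\<^sub>R v) = (x1*y2 - y1*x2) * det2 u v"
  unfolding det2_def by (simp add: algebra_simps)

lemma in_lattice_gen: "of_int m *\<^sub>R b1 + of_int n *\<^sub>R b2 \<in> lattice_gen b1 b2"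
  unfolding lattice_gen_def by blast

lemma lattice_genE:
  assumes "x \<in> lattice_gen b1 b2"
  obtains m n :: int where "x = of_int m *\<^sub>R b1 + of_int n *\<^sub>R b2"
  using assms unfolding lattice_gen_def by blast

lemma det_unique:
  assumes "is_lattice_basis L b1 b2" "is_lattice_basis L c1 c2"
  shows "\<bar>det2 c1 c2\<bar> = \<bar>det2 b1 b2\<bar>"
proof -
  have Lb: "L = lattice_gen b1 b2" and db: "det2 b1 b2 \<noteq> 0"
    using assms(1) unfolding is_lattice_basis_def by auto
  have Lc: "L = lattice_gen c1 c2" and dc: "det2 c1 c2 \<noteq> 0"
    using assms(2) unfolding is_lattice_basis_def by auto
  have "c1 \<in> L" using in_lattice_gen[of 1 c1 0 c2] Lc by simp
  then obtain m1 n1 where c1: "c1 = of_int m1 *\<^sub>R b1 + of_int n1 *\<^sub>R b2"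
    using Lb lattice_genE by metis
  have "c2 \<in> L" using in_lattice_gen[of 0 c1 1 c2] Lc by simp
  then obtain m2 n2 where c2: "c2 = of_int m2 *\<^sub>R b1 + of_int n2 *\<^sub>R b2"
    using Lb lattice_genE by metis
  have "b1 \<in> L" using in_lattice_gen[of 1 b1 0 b2] Lb by simp
  then obtain k1 l1 where b1: "b1 = of_int k1 *\<^sub>R c1 + of_int l1 *\<^sub>R c2"
    using Lc lattice_genE by metis
  have "b2 \<in> L" using in_lattice_gen[of 0 b1 1 b2] Lb by simp
  then obtain k2 l2 where b2: "b2 = of_int k2 *\<^sub>R c1 + of_int l2 *\<^sub>R c2"
    using Lc lattice_genE by metis
  have e1: "det2 c1 c2 = of_int (m1*n2 - n1*m2) * det2 b1 b2"
    unfolding c1 c2 det2_comb by simp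
  have e2: "det2 b1 b2 = of_int (k1*l2 - l1*k2) * det2 c1 c2"
    unfolding b1 b2 det2_comb by simp
  have "det2 b1 b2 = of_int ((k1*l2 - l1*k2) * (m1*n2 - n1*m2)) * det2 b1 b2"
    using e1 e2 by (simp add: mult.assoc)
  then have "of_int ((k1*l2 - l1*k2) * (m1*n2 - n1*m2)) = (1::real)" using db by simp
  then have "(k1*l2 - l1*k2) * (m1*n2 - n1*m2) = 1" by (simp only: of_int_eq_1_iff)
  then have "m1*n2 - n1*m2 = 1 \<or> m1*n2 - n1*m2 = -1"
    using pos_zmult_eq_1_iff_lemma by (metis mult.commute)
  then have "\<bar>m1*n2 - n1*m2\<bar> = 1" by auto
  then have h: "\<bar>real_of_int (m1*n2 - n1*m2)\<bar> = 1" by (metis of_int_abs of_int_1)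
  have "\<bar>det2 c1 c2\<bar> = \<bar>real_of_int (m1*n2 - n1*m2)\<bar> * \<bar>det2 b1 b2\<bar>" using e1 by (simp only: abs_mult)
  then show ?thesis using h by simp
qed

lemma lattice_det_eq:
  assumes "is_lattice_basis L b1 b2"
  shows "lattice_det L = \<bar>det2 b1 b2\<bar>"
  unfolding lattice_det_def
proof (rule the_equality)
  show "\<exists>c1 c2. is_lattice_basis L c1 c2 \<and> \<bar>det2 b1 b2\<bar> = \<bar>det2 c1 c2\<bar>" using assms by blast
  fix d assume "\<exists>c1 c2. is_lattice_basis L c1 c2 \<and> d = \<bar>det2 c1 c2\<bar>"
  then obtain c1 c2 where "is_lattice_basis L c1 c2" "d = \<bar>det2 c1 c2\<bar>" by blast
  then show "d = \<bar>det2 b1 b2\<bar>" using det_unique[OF assms] by simp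
qed

lemma inner2: "(x::real^2) \<bullet> y = x$1 * y$1 + x$2 * y$2"
  by (simp add: inner_vec_def sum_2)

lemma key_inner:
  fixes x1 x2 y1 y2 :: real
  shows "(x1 - x2/2)*(y1 - y2/2) + (x2* sqrt 3/2)*(y2* sqrt 3/2) = (2*x1*y1 - x1*y2 - x2*y1 + 2*x2*y2)/2"
proof -
  have "(x2* sqrt 3/2)*(y2* sqrt 3/2) = x2*y2*(sqrt 3* sqrt 3)/4" by (simp add: algebra_simps)
  also have "sqrt 3 * sqrt 3 = (3::real)" by simp
  finally show ?thesis by (simp add: field_simps)
qed

lemma key_det:
  fixes x1 x2 y1 y2 :: real
  shows "(x1 - x2/2)*(y2* sqrt 3/2) - (x2* sqrt 3/2)*(y1 - y2/2) = sqrt 3/2 * (x1*y2 - x2*y1)"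
  by (simp add: field_simps)

lemma comps:
  fixes x1 x2 :: int
  defines "b \<equiv> of_int x1 *\<^sub>R (vector [1, 0] :: real^2) + of_int x2 *\<^sub>R vector [-1/2, sqrt 3 / 2]"
  shows "b$1 = x1 - x2/2" "b$2 = x2 * sqrt 3 / 2"
  unfolding b_def by simp_all

lemma int_identity:
  fixes a1 a2 c1 c2 :: int
  shows "4 * (a1^2 - a1*a2 + a2^2) * (c1^2 - c1*c2 + c2^2)
     = (2*a1*c1 - a1*c2 - a2*c1 + 2*a2*c2)^2 + 3 * (a1*c2 - a2*c1)^2"
  by (simp add: power2_eq_square algebra_simps)



theorem lemma5p4:
  fixes J :: nat
  assumes "J > 0"
    and "\<not> special_form J"
    and "prime J
         \<or> (\<exists>p q. prime p \<and> prime q \<and> odd p \<and> odd q \<and> q > 3 * p \<and> J = p * q)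
         \<or> (\<exists>p. prime p \<and> odd p \<and> J = 2 * p)"
  shows "\<not> (\<exists>\<Gamma>. \<Gamma> \<subseteq> Lambda_h \<and> full_rank_lattice \<Gamma> \<and> well_rounded \<Gamma>
              \<and> lattice_index Lambda_h \<Gamma> = real J)"
proof
  assume "\<exists>\<Gamma>. \<Gamma> \<subseteq> Lambda_h \<and> full_rank_lattice \<Gamma> \<and> well_rounded \<Gamma>
              \<and> lattice_index Lambda_h \<Gamma> = real J"
  then obtain G where sub: "G \<subseteq> Lambda_h" and wr: "well_rounded G"
    and idx: "lattice_index Lambda_h G = real J" by blast
  from wr obtain b1 b2 where bas: "is_lattice_basis G b1 b2"
    and mn: "\<forall>v\<in>G. v \<noteq> 0 \<longrightarrow> norm b1 \<le> norm v \<and> norm b2 \<le> norm v"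
    unfolding well_rounded_def by blast
  define e where "e = (vector [1, 0] :: real^2)"
  define w where "w = (vector [-1/2, sqrt 3 / 2] :: real^2)"
  have LH: "Lambda_h = lattice_gen e w" unfolding Lambda_h_def e_def w_def ..
  have dew: "det2 e w = sqrt 3 / 2" unfolding det2_def e_def w_def by simp
  have basH: "is_lattice_basis Lambda_h e w" 
  proof -
    have "sqrt 3 / 2 \<noteq> (0::real)" by simp
    then show ?thesis unfolding is_lattice_basis_def dew using LH by blast
  qed
  have detH: "lattice_det Lambda_h = sqrt 3 / 2" using lattice_det_eq[OF basH] dew by simp
  have detG: "lattice_det G = \<bar>det2 b1 b2\<bar>" using lattice_det_eq[OF bas] .
  have G: "G = lattice_gen b1 b2" and db: "det2 b1 b2 \<noteq> 0"
    using bas unfolding is_lattice_basis_def by auto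
  have b1G: "b1 \<in> G" using in_lattice_gen[of 1 b1 0 b2] G by simp
  have b2G: "b2 \<in> G" using in_lattice_gen[of 0 b1 1 b2] G by simp
  have b12G: "b1 + b2 \<in> G" using in_lattice_gen[of 1 b1 1 b2] G by simp
  have b1m2G: "b1 - b2 \<in> G" using in_lattice_gen[of 1 b1 "-1" b2] G by simp
  have b1nz: "b1 \<noteq> 0" using db unfolding det2_def by auto
  have b2nz: "b2 \<noteq> 0" using db unfolding det2_def by auto
  have b12nz: "b1 + b2 \<noteq> 0"
  proof
    assume "b1 + b2 = 0"
    then have "b2 = - b1" by (metis add.commute eq_neg_iff_add_eq_0)
    then show False using db unfolding det2_def by (simp add: algebra_simps)
  qed
  have b1m2nz: "b1 - b2 \<noteq> 0"
  proof
    assume "b1 - b2 = 0"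
    then have "b2 = b1" by simp
    then show False using db unfolding det2_def by (simp add: algebra_simps)
  qed
  have i1: "b1 \<bullet> b1 \<le> b2 \<bullet> b2" using mn b2G b2nz norm_le by blast
  have i2: "b2 \<bullet> b2 \<le> b1 \<bullet> b1" using mn b1G b1nz norm_le by blast
  have i3: "b1 \<bullet> b1 \<le> (b1 + b2) \<bullet> (b1 + b2)" using mn b12G b12nz norm_le by blast
  have i4: "b1 \<bullet> b1 \<le> (b1 - b2) \<bullet> (b1 - b2)" using mn b1m2G b1m2nz norm_le by blast
  have "b1 \<in> lattice_gen e w" using b1G sub LH by blast
  then obtain a1 a2 where a: "b1 = of_int a1 *\<^sub>R e + of_int a2 *\<^sub>R w" by (rule lattice_genE)
  have "b2 \<in> lattice_gen e w" using b2G sub LH by blast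
  then obtain c1 c2 where c: "b2 = of_int c1 *\<^sub>R e + of_int c2 *\<^sub>R w" by (rule lattice_genE)
  have ca: "b1$1 = a1 - a2/2" "b1$2 = a2 * sqrt 3 / 2" using comps[of a1 a2] unfolding a e_def w_def by simp_all
  have cc: "b2$1 = c1 - c2/2" "b2$2 = c2 * sqrt 3 / 2" using comps[of c1 c2] unfolding c e_def w_def by simp_all
  define n where "n = a1^2 - a1*a2 + a2^2"
  define n2 where "n2 = c1^2 - c1*c2 + c2^2"
  define P where "P = 2*a1*c1 - a1*c2 - a2*c1 + 2*a2*c2"
  define D where "D = a1*c2 - a2*c1"
  have g11: "b1 \<bullet> b1 = of_int n"
  proof -
    have "b1 \<bullet> b1 = (2*a1*a1 - a1*a2 - a2*a1 + 2*a2*a2)/2"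
      unfolding inner2 ca using key_inner[of "of_int a1" "of_int a2" "of_int a1" "of_int a2"] by simp
    then show ?thesis unfolding n_def by (simp add: power2_eq_square field_simps)
  qed
  have g22: "b2 \<bullet> b2 = of_int n2"
  proof -
    have "b2 \<bullet> b2 = (2*c1*c1 - c1*c2 - c2*c1 + 2*c2*c2)/2"
      unfolding inner2 cc using key_inner[of "of_int c1" "of_int c2" "of_int c1" "of_int c2"] by simp
    then show ?thesis unfolding n2_def by (simp add: power2_eq_square field_simps)
  qed
  have g12: "b1 \<bullet> b2 = of_int P / 2"
  proof -
    have "b1 \<bullet> b2 = (2*a1*c1 - a1*c2 - a2*c1 + 2*a2*c2)/2"
      unfolding inner2 ca cc using key_inner[of "of_int a1" "of_int a2" "of_int c1" "of_int c2"] by simp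
    then show ?thesis unfolding P_def by simp
  qed
  have gd: "det2 b1 b2 = sqrt 3 / 2 * of_int D"
    unfolding det2_def ca cc D_def using key_det[of "of_int a1" "of_int a2" "of_int c2" "of_int c1"] by simp
  have "(b1 + b2) \<bullet> (b1 + b2) = b1 \<bullet> b1 + 2 * (b1 \<bullet> b2) + b2 \<bullet> b2"
    by (simp add: inner_add_left inner_add_right inner_commute)
  then have "real_of_int n \<le> real_of_int (n + P + n2)" using i3 g11 g22 g12 by simp
  then have i3': "n \<le> n + P + n2" by (simp only: of_int_le_iff)
  have "(b1 - b2) \<bullet> (b1 - b2) = b1 \<bullet> b1 - 2 * (b1 \<bullet> b2) + b2 \<bullet> b2"
    by (simp add: inner_diff_left inner_diff_right inner_commute)
  then have "real_of_int n \<le> real_of_int (n - P + n2)" using i4 g11 g22 g12 by simp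
  then have i4': "n \<le> n - P + n2" by (simp only: of_int_le_iff)
  have "real_of_int n \<le> real_of_int n2" using i1 g11 g22 by simp
  then have "n \<le> n2" by (simp only: of_int_le_iff)
  moreover have "real_of_int n2 \<le> real_of_int n" using i2 g11 g22 by simp
  then have "n2 \<le> n" by (simp only: of_int_le_iff)
  ultimately have nn2: "n2 = n" by linarith
  have Pl: "- P \<le> n" "P \<le> n" using i3' i4' nn2 by linarith+
  have "4 * n * n2 = P^2 + 3 * D^2"
    unfolding n_def n2_def P_def D_def by (rule int_identity)
  then have idn: "4 * n * n = P^2 + 3 * D^2" using nn2 by simp
  have "\<bar>sqrt 3 / 2 * of_int D\<bar> / (sqrt 3 / 2) = real J"
    using idx unfolding lattice_index_def detH detG gd .
  moreover have "\<bar>sqrt 3 / 2 * of_int D\<bar> / (sqrt 3 / 2) = real_of_int \<bar>D\<bar>" by (simp add: abs_mult)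
  ultimately have "real_of_int \<bar>D\<bar> = real_of_int (int J)" by simp
  then have DJ: "\<bar>D\<bar> = int J" by (simp only: of_int_eq_iff)
  then have D2: "D^2 = int J ^ 2" by (metis power2_abs)
  have n0: "n \<ge> 0"
  proof -
    have "4 * n = (2*a1 - a2)^2 + 3 * a2^2" unfolding n_def by (simp add: power2_eq_square algebra_simps)
    moreover have "(2*a1 - a2)^2 + 3 * a2^2 \<ge> 0" by simp
    ultimately show ?thesis by linarith
  qed
  define s where "s = 2*n - P"
  define t where "t = 2*n + P"
  have st: "s * t = 3 * int J ^ 2"
  proof -
    have "s * t = 4 * n * n - P^2" unfolding s_def t_def by (simp add: power2_eq_square algebra_simps)
    then show ?thesis using idn D2 by simp
  qed
  have sn: "s + t = 4 * n" unfolding s_def t_def by simp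
  have h1: "s \<le> 3 * t" "t \<le> 3 * s" using Pl by (simp_all add: s_def t_def)
  have sge: "s \<ge> 0" "t \<ge> 0" using Pl n0 by (simp_all add: s_def t_def)
  have "s * t > 0" using st assms(1) by simp
  then have pos: "s > 0" "t > 0" using sge by (auto simp: zero_less_mult_iff)
  have cases3: "(prime J \<and> J mod 3 = 2) \<or> (\<exists>p. prime p \<and> odd p \<and> J = 2 * p)
     \<or> (\<exists>p q. prime p \<and> prime q \<and> odd p \<and> q > 3 * p \<and> J = p * q \<and> (p mod 3 = 2 \<or> q mod 3 = 2))"
  proof -
    from assms(3) consider (P) "prime J"
      | (Q) p q where "prime p" "prime q" "odd p" "odd q" "q > 3*p" "J = p*q"
      | (T) p where "prime p" "odd p" "J = 2*p" by blast
    then show ?thesis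
    proof cases
      case P
      have "J mod 3 = 2"
      proof (rule ccontr)
        assume "J mod 3 \<noteq> 2"
        then have "J mod 3 = 0 \<or> J mod 3 = 1" by presburger
        then have "special_form J"
        proof
          assume "J mod 3 = 0"
          then have "3 dvd J" by presburger
          then have "J = 3" using primes_dvd_imp_eq[of 3 J] P by simp
          then show "special_form J" unfolding special_form_def
            by (intro exI[of _ 1] exI[of _ "{}"] exI[of _ "{}"] exI[of _ "\<lambda>_. 0"] exI[of _ "\<lambda>_. 0"]) simp
        next
          assume "J mod 3 = 1"
          then show "special_form J" unfolding special_form_def
            by (intro exI[of _ 0] exI[of _ "{J}"] exI[of _ "{}"] exI[of _ "\<lambda>_. 1"] exI[of _ "\<lambda>_. 0"]) (simp add: P)
        qed
        then show False using assms(2) by blast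
      qed
      then show ?thesis using P by blast
    next
      case T then show ?thesis by blast
    next
      case Q
      have "p mod 3 = 2 \<or> q mod 3 = 2"
      proof (rule ccontr)
        assume nm: "\<not> (p mod 3 = 2 \<or> q mod 3 = 2)"
        have "p \<ge> 2" using prime_ge_2_nat[OF Q(1)] .
        then have "q \<noteq> 3" "p \<noteq> q" using Q(5) by linarith+
        have q1: "q mod 3 = 1"
        proof (rule ccontr)
          assume "q mod 3 \<noteq> 1"
          then have "3 dvd q" using nm by presburger
          then have "q = 3" using primes_dvd_imp_eq[of 3 q] Q(2) by simp
          then show False using \<open>q \<noteq> 3\<close> by blast
        qed
        have p1: "p = 3 \<or> p mod 3 = 1"
        proof (rule ccontr)
          assume "\<not> (p = 3 \<or> p mod 3 = 1)"
          then have "3 dvd p" "p \<noteq> 3" using nm by presburger+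
          then show False using primes_dvd_imp_eq[of 3 p] Q(1) by simp
        qed
        have "special_form J"
          using p1
        proof
          assume "p = 3"
          then show "special_form J" unfolding special_form_def
            by (intro exI[of _ 1] exI[of _ "{q}"] exI[of _ "{}"] exI[of _ "\<lambda>_. 1"] exI[of _ "\<lambda>_. 0"])
              (simp add: Q q1)
        next
          assume "p mod 3 = 1"
          then show "special_form J" unfolding special_form_def
            by (intro exI[of _ 0] exI[of _ "{p, q}"] exI[of _ "{}"] exI[of _ "\<lambda>_. 1"] exI[of _ "\<lambda>_. 0"])
              (simp add: Q q1 \<open>p \<noteq> q\<close>)
        qed
        then show False using assms(2) by blast
      qed
      then show ?thesis using Q by blast
    qed
  qed
  from cases3 consider (A) "prime J" "J mod 3 = 2"
    | (B) p where "prime p" "odd p" "J = 2*p"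
    | (C) p q where "prime p" "prime q" "odd p" "q > 3 * p" "J = p * q" "p mod 3 = 2 \<or> q mod 3 = 2"
    by blast
  note cs = this
  have nJ: "n = int J"
    using cs
  proof cases
    case A
    then show ?thesis using caseA[OF _ _ pos st sn h1] by blast
  next
    case (B p)
    moreover from this have "s * t = 3 * int (2 * p)^2" using st by simp
    ultimately show ?thesis using caseB[OF _ _ pos _ sn h1, of p] by simp
  next
    case (C p q)
    moreover from this have "s * t = 3 * int (p * q)^2" using st by simp
    ultimately show ?thesis using caseC[OF _ _ _ _ pos _ sn h1, of p q] by simp
  qed
  have nrm: "a1^2 - a1*a2 + a2^2 = int J" using nJ unfolding n_def .
  show False
    using cs
  proof cases
    case A
    then have "J^2 dvd J" using norm_sq_dvd[OF _ _ nrm] by simp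
    then have "J^2 \<le> J" using assms(1) by (simp add: dvd_imp_le)
    moreover have "J \<ge> 2" using \<open>prime J\<close> prime_ge_2_nat by blast
    moreover from this have "2 * J \<le> J^2" by (simp add: power2_eq_square mult_right_mono)
    ultimately show False using assms(1) by linarith
  next
    case (B p)
    then have "2^2 dvd J" using norm_sq_dvd[where r=2, OF _ _ nrm] by simp
    then show False using \<open>odd p\<close> \<open>J = 2 * p\<close> by auto
  next
    case (C p q)
    note pp = C(1) and pq = C(2) and qp = C(4) and J = C(5) and m = C(6)
    have pq_ne: "p \<noteq> q" using qp by auto
    from m show False
    proof
      assume "p mod 3 = 2"
      then have "p^2 dvd p * q" using norm_sq_dvd[OF pp _ nrm] J by simp
      moreover have "p \<noteq> 0" using pp by auto
      ultimately have "p dvd q" by (simp add: power2_eq_square)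
      then show False using primes_dvd_imp_eq[OF pp pq] pq_ne by blast
    next
      assume "q mod 3 = 2"
      then have "q^2 dvd q * p" using norm_sq_dvd[OF pq _ nrm] J by (simp add: mult.commute)
      moreover have "q \<noteq> 0" using pq by auto
      ultimately have "q dvd p" by (simp add: power2_eq_square)
      then show False using primes_dvd_imp_eq[OF pq pp] pq_ne by blast
    qed
  qed
qed

end
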